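(* Let $c,\alpha,\beta>0$, $\mathbf A\in\mathbb{R}^{2\times2}$ symmetric positive definite, $\rho>0$, $\mathbf m\in\mathbb{R}^2$, $H\in\mathbb{R}$, and let $$\phi(\tilde\rho)=\rho+c\big\langle(2c\alpha\mathbf A+\tilde\rho\mathbf I)^{-1}\mathbf m,\ \alpha\mathbf A(2c\alpha\mathbf A+\tilde\rho\mathbf I)^{-1}\mathbf m\big\rangle+c\,(2c\beta+\tilde\rho)^{-2}\beta H^2.$$ If $c$ is large enough that $\frac{1}{4c^2}\big(\mathbf m^{\mathrm T}(\alpha\mathbf A)^{-2}\mathbf m+\beta^{-2}H^2\big)<1$, then for every initial guess $\tilde\rho^{(0)}\in(0,\infty)$ the iteration $\tilde\rho^{(\ell+1)}=\phi(\tilde\rho^{(\ell)})$, $\ell=0,1,2,\dots$, converges to the unique fixed point $\rho^*\in(0,\infty)$ of $\phi$.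
   Context: None beyond the statement: $\mathbf I$ is the $2\times2$ identity and $\langle\cdot,\cdot\rangle$ the Euclidean inner product. (The fixed point $\rho^*$ is the density component of the proximal operator of the WFR cost $J(\mathbf m,\rho,H)=\alpha\rho^{-1}\mathbf m^{\mathrm T}\mathbf A\mathbf m+\beta\rho^{-1}H^2$.) *)

theory Defs
  imports "HOL-Analysis.Analysis"
begin

definition spd2 :: "real^2^2 \<Rightarrow> bool" where
  "spd2 A \<longleftrightarrow> transpose A = A \<and> (\<forall>x::real^2. x \<noteq> 0 \<longrightarrow> x \<bullet> (A *v x) > 0)"

definition wfr_phi ::
  "real \<Rightarrow> real \<Rightarrow> real \<Rightarrow> real^2^2 \<Rightarrow> real \<Rightarrow> real^2 \<Rightarrow> real \<Rightarrow> real \<Rightarrow> real" where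
  "wfr_phi c \<alpha> \<beta> A \<rho> m H \<rho>t =
     (let B = matrix_inv ((2 * c * \<alpha>) *\<^sub>R A + \<rho>t *\<^sub>R mat 1) in
      \<rho> + c * ((B *v m) \<bullet> ((\<alpha> *\<^sub>R A) *v (B *v m)))
        + c * (inverse ((2 * c * \<beta> + \<rho>t)\<^sup>2)) * \<beta> * H\<^sup>2)"

end

theory Submission
  imports Defs
begin


lemma mv2: "(A::real^2^2) *v x = vector [A$1$1 * x$1 + A$1$2 * x$2, A$2$1 * x$1 + A$2$2 * x$2]"
  by (simp add: vec_eq_iff forall_2 matrix_vector_mult_def sum_2)

lemma eig_scalar:
  fixes a b d :: real
  shows "\<exists>u w l1 l2. u\<^sup>2 + w\<^sup>2 = 1 \<and> a*u + b* w = l1*u \<and> b*u + d* w = l1* w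
     \<and> -a* w + b*u = -l2* w \<and> -b* w + d*u = l2*u"
proof (cases "b = 0")
  case True
  then show ?thesis by (rule_tac x=1 in exI, rule_tac x=0 in exI) auto
next
  case False
  define \<delta> where "\<delta> = sqrt (((a-d)/2)\<^sup>2 + b\<^sup>2)"
  have d2: "\<delta>\<^sup>2 = ((a-d)/2)\<^sup>2 + b\<^sup>2" unfolding \<delta>_def by simp
  define l1 where "l1 = (a+d)/2 + \<delta>"
  define l2 where "l2 = (a+d)/2 - \<delta>"
  define n where "n = sqrt (b\<^sup>2 + (l1-a)\<^sup>2)"
  have npos: "n > 0" unfolding n_def using False by (simp add: add_pos_nonneg)
  have n2: "n\<^sup>2 = b\<^sup>2 + (l1-a)\<^sup>2" unfolding n_def by simp
  have key: "(l1-a)*(l1-d) = b\<^sup>2" unfolding l1_def using d2 by (simp add: algebra_simps power2_eq_square) (simp add: field_simps)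
  have s: "l2 = a + d - l1" unfolding l1_def l2_def by simp
  show ?thesis
  proof (rule exI[of _ "b/n"], rule exI[of _ "(l1-a)/n"], rule exI[of _ l1], rule exI[of _ l2], intro conjI)
    show "(b/n)\<^sup>2 + ((l1-a)/n)\<^sup>2 = 1" using npos n2 False by (simp add: power_divide flip: add_divide_distrib)
    show "a*(b/n) + b*((l1-a)/n) = l1*(b/n)" using npos by (simp add: field_simps)
    show "b*(b/n) + d*((l1-a)/n) = l1*((l1-a)/n)" using npos key
      by (simp add: field_simps power2_eq_square)
    show "-a*((l1-a)/n) + b*(b/n) = -l2*((l1-a)/n)" using npos key
      by (simp add: field_simps power2_eq_square s)
    show "-b*((l1-a)/n) + d*(b/n) = l2*(b/n)" using npos
      by (simp add: field_simps s)
  qed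
qed

lemma eig_spd:
  fixes A :: "real^2^2"
  assumes "spd2 A"
  obtains e1 e2 :: "real^2" and l1 l2 :: real where
    "e1 \<bullet> e1 = 1" "e2 \<bullet> e2 = 1" "e1 \<bullet> e2 = 0"
    "\<forall>x. x = (x \<bullet> e1) *\<^sub>R e1 + (x \<bullet> e2) *\<^sub>R e2"
    "A *v e1 = l1 *\<^sub>R e1" "A *v e2 = l2 *\<^sub>R e2" "l1 > 0" "l2 > 0"
proof -
  have "(transpose A)$2$1 = A$2$1" using assms unfolding spd2_def by simp
  then have sym: "A$2$1 = A$1$2" by (simp add: transpose_def)
  have pd: "\<And>x. x \<noteq> 0 \<Longrightarrow> x \<bullet> (A *v x) > 0" using assms unfolding spd2_def by blast
  obtain u w l1 l2 where uw: "u\<^sup>2 + w\<^sup>2 = 1" "A$1$1*u + A$1$2* w = l1*u" "A$1$2*u + A$2$2* w = l1* w"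
     "-A$1$1* w + A$1$2*u = -l2* w" "-A$1$2* w + A$2$2*u = l2*u"
    using eig_scalar[of "A$1$1" "A$1$2" "A$2$2"] by blast
  define e1 where "e1 = (vector [u, w] :: real^2)"
  define e2 where "e2 = (vector [-w, u] :: real^2)"
  have i11: "e1 \<bullet> e1 = 1" unfolding e1_def using uw by (simp add: inner_vec_def sum_2 power2_eq_square)
  have i22: "e2 \<bullet> e2 = 1" unfolding e2_def using uw by (simp add: inner_vec_def sum_2 power2_eq_square add.commute)
  have i12: "e1 \<bullet> e2 = 0" unfolding e1_def e2_def by (simp add: inner_vec_def sum_2)
  have dec: "\<forall>x. x = (x \<bullet> e1) *\<^sub>R e1 + (x \<bullet> e2) *\<^sub>R e2"
  proof
    fix x :: "real^2"
    have "x$1 = x$1 * (u\<^sup>2 + w\<^sup>2)" "x$2 = x$2 * (u\<^sup>2 + w\<^sup>2)" using uw by simp_all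
    then show "x = (x \<bullet> e1) *\<^sub>R e1 + (x \<bullet> e2) *\<^sub>R e2"
      unfolding e1_def e2_def by (simp add: vec_eq_iff forall_2 inner_vec_def sum_2 power2_eq_square algebra_simps)
  qed
  have a1: "A *v e1 = l1 *\<^sub>R e1" unfolding e1_def mv2 using uw sym by (simp add: vec_eq_iff forall_2)
  have a2: "A *v e2 = l2 *\<^sub>R e2" unfolding e2_def mv2 using uw sym by (simp add: vec_eq_iff forall_2)
  have "e1 \<noteq> 0" using i11 by auto
  then have "e1 \<bullet> (A *v e1) > 0" by (rule pd)
  then have p1: "l1 > 0" using a1 i11 by simp
  have "e2 \<noteq> 0" using i22 by auto
  then have "e2 \<bullet> (A *v e2) > 0" by (rule pd)
  then have p2: "l2 > 0" using a2 i22 by simp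
  show ?thesis using that i11 i22 i12 dec a1 a2 p1 p2 by blast
qed

lemma matrix_inv_left:
  fixes N :: "real^2^2"
  assumes "invertible N"
  shows "matrix_inv N ** N = mat 1"
proof -
  have "\<exists>N'. N ** N' = mat 1 \<and> N' ** N = mat 1" using assms unfolding invertible_def .
  then have "N ** matrix_inv N = mat 1 \<and> matrix_inv N ** N = mat 1"
    unfolding matrix_inv_def by (rule someI_ex)
  then show ?thesis by blast
qed

lemma inv_eig:
  fixes N :: "real^2^2" and e1 e2 :: "real^2"
  assumes "e1 \<bullet> e1 = 1" "e2 \<bullet> e2 = 1" "e1 \<bullet> e2 = 0"
    "\<forall>x. x = (x \<bullet> e1) *\<^sub>R e1 + (x \<bullet> e2) *\<^sub>R e2"
    "N *v e1 = \<mu>1 *\<^sub>R e1" "N *v e2 = \<mu>2 *\<^sub>R e2" "\<mu>1 \<noteq> 0" "\<mu>2 \<noteq> 0"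
  shows "matrix_inv N *v e1 = (1/\<mu>1) *\<^sub>R e1" "matrix_inv N *v e2 = (1/\<mu>2) *\<^sub>R e2"
proof -
  have ker: "\<forall>x. N *v x = 0 \<longrightarrow> x = 0"
  proof (intro allI impI)
    fix x :: "real^2"
    assume x0: "N *v x = 0"
    have "N *v x = ((x \<bullet> e1) * \<mu>1) *\<^sub>R e1 + ((x \<bullet> e2) * \<mu>2) *\<^sub>R e2"
      using arg_cong[of _ _ "(*v) N", OF assms(4)[rule_format, of x]] assms(5,6)
      by (simp add: matrix_vector_right_distrib matrix_vector_mult_scaleR)
    then have z: "((x \<bullet> e1) * \<mu>1) *\<^sub>R e1 + ((x \<bullet> e2) * \<mu>2) *\<^sub>R e2 = 0" using x0 by simp
    have "e1 \<bullet> (((x \<bullet> e1) * \<mu>1) *\<^sub>R e1 + ((x \<bullet> e2) * \<mu>2) *\<^sub>R e2) = (x \<bullet> e1) * \<mu>1"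
      using assms by (simp add: inner_add_right)
    then have c1: "x \<bullet> e1 = 0" using z assms by simp
    have "e2 \<bullet> (((x \<bullet> e1) * \<mu>1) *\<^sub>R e1 + ((x \<bullet> e2) * \<mu>2) *\<^sub>R e2) = (x \<bullet> e2) * \<mu>2"
      using assms by (simp add: inner_add_right inner_commute)
    then have c2: "x \<bullet> e2 = 0" using z assms by simp
    show "x = 0" using assms(4)[rule_format, of x] c1 c2 by simp
  qed
  then have "invertible N" using matrix_left_invertible_ker invertible_left_inverse by blast
  then have L: "matrix_inv N ** N = mat 1" by (rule matrix_inv_left)
  have "matrix_inv N *v e1 = matrix_inv N *v (N *v ((1/\<mu>1) *\<^sub>R e1))"
    using assms by (simp add: matrix_vector_mult_scaleR)
  also have "\<dots> = (1/\<mu>1) *\<^sub>R e1" by (simp add: matrix_vector_mul_assoc L)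
  finally show "matrix_inv N *v e1 = (1/\<mu>1) *\<^sub>R e1" .
  have "matrix_inv N *v e2 = matrix_inv N *v (N *v ((1/\<mu>2) *\<^sub>R e2))"
    using assms by (simp add: matrix_vector_mult_scaleR)
  also have "\<dots> = (1/\<mu>2) *\<^sub>R e2" by (simp add: matrix_vector_mul_assoc L)
  finally show "matrix_inv N *v e2 = (1/\<mu>2) *\<^sub>R e2" .
qed



lemma diffid:
  fixes a X Y :: real
  assumes "X > 0" "Y > 0"
  shows "a/X\<^sup>2 - a/Y\<^sup>2 = (a*(Y-X)) * (1/(X*Y\<^sup>2) + 1/(X\<^sup>2*Y))"
  using assms by (simp add: field_simps power2_eq_square)

lemma lip1:
  fixes a b r s :: real
  assumes "a \<ge> 0" "b > 0" "r \<ge> 0" "s \<ge> 0"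
  shows "\<bar>a/(b+r)\<^sup>2 - a/(b+s)\<^sup>2\<bar> \<le> 2*a/b^3 * \<bar>r-s\<bar>"
proof -
  have X: "b+r > 0" "b+s > 0" using assms by auto
  have e: "a/(b+r)\<^sup>2 - a/(b+s)\<^sup>2 = (a*(s-r)) * (1/((b+r)*(b+s)\<^sup>2) + 1/((b+r)\<^sup>2*(b+s)))"
    using diffid[OF X, of a] by simp
  have p1: "b^3 \<le> (b+r)*(b+s)\<^sup>2"
  proof -
    have "b^3 = b * b\<^sup>2" by (simp add: power2_eq_square power3_eq_cube)
    also have "\<dots> \<le> (b+r)*(b+s)\<^sup>2"
      by (rule mult_mono) (use assms in \<open>auto intro: power_mono\<close>)
    finally show ?thesis .
  qed
  have p2: "b^3 \<le> (b+r)\<^sup>2*(b+s)"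
  proof -
    have "b^3 = b\<^sup>2 * b" by (simp add: power2_eq_square power3_eq_cube)
    also have "\<dots> \<le> (b+r)\<^sup>2*(b+s)"
      by (rule mult_mono) (use assms in \<open>auto intro: power_mono\<close>)
    finally show ?thesis .
  qed
  have b3: "b^3 > 0" using assms by simp
  have q1: "1/((b+r)*(b+s)\<^sup>2) \<le> 1/b^3" using p1 b3 X by (intro divide_left_mono) auto
  have q2: "1/((b+r)\<^sup>2*(b+s)) \<le> 1/b^3" using p2 b3 X by (intro divide_left_mono) auto
  have nn: "0 \<le> 1/((b+r)*(b+s)\<^sup>2) + 1/((b+r)\<^sup>2*(b+s))" using X by simp
  have "\<bar>a/(b+r)\<^sup>2 - a/(b+s)\<^sup>2\<bar> = (a*\<bar>r-s\<bar>) * (1/((b+r)*(b+s)\<^sup>2) + 1/((b+r)\<^sup>2*(b+s)))"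
    unfolding e using nn assms by (simp add: abs_mult abs_minus_commute)
  also have "\<dots> \<le> (a*\<bar>r-s\<bar>) * (2/b^3)"
    using q1 q2 assms by (intro mult_left_mono) auto
  finally show ?thesis by (simp add: mult.commute mult.left_commute)
qed

lemma scalar_main:
  fixes \<phi> :: "real \<Rightarrow> real" and \<rho> a1 a2 a3 b1 b2 b3 :: real
  assumes "\<rho> > 0" "a1 \<ge> 0" "a2 \<ge> 0" "a3 \<ge> 0" "b1 > 0" "b2 > 0" "b3 > 0"
    and qlt: "2*a1/b1^3 + 2*a2/b2^3 + 2*a3/b3^3 < 1"
    and eq: "\<forall>r\<ge>0. \<phi> r = \<rho> + a1/(b1+r)\<^sup>2 + a2/(b2+r)\<^sup>2 + a3/(b3+r)\<^sup>2"
  shows "\<exists>\<rho>s. \<rho>s > 0 \<and> \<phi> \<rho>s = \<rho>s \<and> (\<forall>r. r > 0 \<and> \<phi> r = r \<longrightarrow> r = \<rho>s)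
           \<and> (\<forall>\<rho>0. \<rho>0 > 0 \<longrightarrow> (\<lambda>l. (\<phi> ^^ l) \<rho>0) \<longlonglongrightarrow> \<rho>s)"
proof -
  define g where "g r = \<rho> + a1/(b1+r)\<^sup>2 + a2/(b2+r)\<^sup>2 + a3/(b3+r)\<^sup>2" for r
  define q where "q = 2*a1/b1^3 + 2*a2/b2^3 + 2*a3/b3^3"
  have q0: "q \<ge> 0" unfolding q_def using assms by simp
  have q1: "q < 1" unfolding q_def using qlt .
  have lip: "\<bar>g r - g s\<bar> \<le> q * \<bar>r - s\<bar>" if "r \<ge> 0" "s \<ge> 0" for r s
  proof -
    have "\<bar>g r - g s\<bar> \<le> \<bar>a1/(b1+r)\<^sup>2 - a1/(b1+s)\<^sup>2\<bar> + \<bar>a2/(b2+r)\<^sup>2 - a2/(b2+s)\<^sup>2\<bar>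
       + \<bar>a3/(b3+r)\<^sup>2 - a3/(b3+s)\<^sup>2\<bar>" unfolding g_def by linarith
    also have "\<dots> \<le> 2*a1/b1^3 * \<bar>r-s\<bar> + 2*a2/b2^3 * \<bar>r-s\<bar> + 2*a3/b3^3 * \<bar>r-s\<bar>"
      using lip1[of a1 b1 r s] lip1[of a2 b2 r s] lip1[of a3 b3 r s] assms that
      by (intro add_mono) auto
    also have "\<dots> = q * \<bar>r - s\<bar>" unfolding q_def by (simp add: algebra_simps)
    finally show ?thesis .
  qed
  have gge: "g r \<ge> \<rho>" if "r \<ge> 0" for r
    unfolding g_def using assms that by (simp add: add_nonneg_nonneg)
  define h where "h r = g (max r 0)" for r
  have "\<forall>x y. dist (h x) (h y) \<le> q * dist x y"
  proof (intro allI)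
    fix x y :: real
    have "dist (h x) (h y) \<le> q * \<bar>max x 0 - max y 0\<bar>" unfolding h_def dist_real_def
      by (rule lip) auto
    also have "\<dots> \<le> q * dist x y" unfolding dist_real_def using q0
      by (intro mult_left_mono) auto
    finally show "dist (h x) (h y) \<le> q * dist x y" .
  qed
  then obtain x where hx: "h x = x" using banach_fix_type[OF q0 q1] by blast
  have xge: "x \<ge> \<rho>" using hx gge[of "max x 0"] unfolding h_def by auto
  then have xpos: "x > 0" using assms by simp
  have gx: "g x = x" using hx xpos unfolding h_def by simp
  have phix: "\<phi> x = x" using eq gx xpos unfolding g_def by simp
  have uniq: "r = x" if "r > 0" "\<phi> r = r" for r
  proof -
    have gr: "g r = r" using eq that unfolding g_def by simp
    have "\<bar>r - x\<bar> \<le> q * \<bar>r - x\<bar>" using lip[of r x] gr gx that xpos by simp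
    then have "\<bar>r - x\<bar> = 0" using q1
      by (metis abs_ge_zero mult_le_cancel_right1 not_le order_antisym)
    then show ?thesis by simp
  qed
  have conv: "(\<lambda>l. (\<phi> ^^ l) \<rho>0) \<longlonglongrightarrow> x" if "\<rho>0 > 0" for \<rho>0
  proof -
    have bnd: "(\<phi> ^^ n) \<rho>0 \<ge> 0 \<and> \<bar>(\<phi> ^^ n) \<rho>0 - x\<bar> \<le> q^n * \<bar>\<rho>0 - x\<bar>" for n
    proof (induction n)
      case 0
      then show ?case using that by simp
    next
      case (Suc n)
      let ?y = "(\<phi> ^^ n) \<rho>0"
      have py: "(\<phi> ^^ Suc n) \<rho>0 = g ?y" using Suc eq unfolding g_def by simp
      have "\<bar>g ?y - x\<bar> = \<bar>g ?y - g x\<bar>" using gx by simp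
      also have "\<dots> \<le> q * \<bar>?y - x\<bar>" using lip[of ?y x] Suc xpos by simp
      also have "\<dots> \<le> q * (q^n * \<bar>\<rho>0 - x\<bar>)" using Suc q0 by (intro mult_left_mono) auto
      finally show ?case using py gge[of ?y] Suc assms by simp
    qed
    have z: "(\<lambda>n. q^n * \<bar>\<rho>0 - x\<bar>) \<longlonglongrightarrow> 0"
      using LIMSEQ_power_zero[of q] q0 q1 by (intro tendsto_mult_left_zero) auto
    have "(\<lambda>n. (\<phi> ^^ n) \<rho>0 - x) \<longlonglongrightarrow> 0"
      by (rule Lim_null_comparison[OF _ z]) (use bnd in auto)
    then show ?thesis by (simp add: Lim_null[symmetric])
  qed
  show ?thesis using xpos phix uniq conv by blast
qed



lemma mv_basis:
  fixes N :: "real^2^2" and e1 e2 :: "real^2"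
  assumes "N *v e1 = \<mu>1 *\<^sub>R e1" "N *v e2 = \<mu>2 *\<^sub>R e2"
  shows "N *v (x1 *\<^sub>R e1 + x2 *\<^sub>R e2) = (\<mu>1 * x1) *\<^sub>R e1 + (\<mu>2 * x2) *\<^sub>R e2"
  using assms by (simp add: matrix_vector_right_distrib matrix_vector_mult_scaleR mult.commute)

lemma inner_basis:
  fixes e1 e2 :: "real^2"
  assumes "e1 \<bullet> e1 = 1" "e2 \<bullet> e2 = 1" "e1 \<bullet> e2 = 0"
  shows "(x1 *\<^sub>R e1 + x2 *\<^sub>R e2) \<bullet> (y1 *\<^sub>R e1 + y2 *\<^sub>R e2) = x1 * y1 + x2 * y2"
  using assms by (simp add: inner_add_left inner_add_right inner_commute)

theorem mainTheorem15:
  fixes c \<alpha> \<beta> \<rho> H :: real and A :: "real^2^2" and m :: "real^2"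
  assumes "c > 0" and "\<alpha> > 0" and "\<beta> > 0"
    and "spd2 A" and "\<rho> > 0"
    and "(1 / (4 * c\<^sup>2)) *
           (m \<bullet> ((matrix_inv (\<alpha> *\<^sub>R A) ** matrix_inv (\<alpha> *\<^sub>R A)) *v m)
            + inverse (\<beta>\<^sup>2) * H\<^sup>2) < 1"
  shows "\<exists>\<rho>s. \<rho>s > 0 \<and> wfr_phi c \<alpha> \<beta> A \<rho> m H \<rho>s = \<rho>s
           \<and> (\<forall>r. r > 0 \<and> wfr_phi c \<alpha> \<beta> A \<rho> m H r = r \<longrightarrow> r = \<rho>s)
           \<and> (\<forall>\<rho>0. \<rho>0 > 0 \<longrightarrow>
                 (\<lambda>l. (wfr_phi c \<alpha> \<beta> A \<rho> m H ^^ l) \<rho>0) \<longlonglongrightarrow> \<rho>s)"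
proof -
  obtain e1 e2 :: "real^2" and l1 l2 :: real where
    o1: "e1 \<bullet> e1 = 1" and o2: "e2 \<bullet> e2 = 1" and o12: "e1 \<bullet> e2 = 0"
    and dec: "\<forall>x. x = (x \<bullet> e1) *\<^sub>R e1 + (x \<bullet> e2) *\<^sub>R e2"
    and A1: "A *v e1 = l1 *\<^sub>R e1" and A2: "A *v e2 = l2 *\<^sub>R e2" and l1: "l1 > 0" and l2: "l2 > 0"
    using eig_spd[OF assms(4)] by blast
  define w1 where "w1 = m \<bullet> e1"
  define w2 where "w2 = m \<bullet> e2"
  have mdec: "m = w1 *\<^sub>R e1 + w2 *\<^sub>R e2" unfolding w1_def w2_def using dec by blast
  have sA: "(k *\<^sub>R A) *v e1 = (k * l1) *\<^sub>R e1" "(k *\<^sub>R A) *v e2 = (k * l2) *\<^sub>R e2" for k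
    using A1 A2 by (simp_all flip: scaleR_matrix_vector_assoc)
  define Ai where "Ai = matrix_inv (\<alpha> *\<^sub>R A)"
  have Ai: "Ai *v e1 = (1/(\<alpha>*l1)) *\<^sub>R e1" "Ai *v e2 = (1/(\<alpha>*l2)) *\<^sub>R e2"
    unfolding Ai_def using inv_eig[OF o1 o2 o12 dec sA(1)[of \<alpha>] sA(2)[of \<alpha>]] assms l1 l2 by auto
  have "m \<bullet> ((Ai ** Ai) *v m) = w1 * ((1/(\<alpha>*l1)) * ((1/(\<alpha>*l1)) * w1)) + w2 * ((1/(\<alpha>*l2)) * ((1/(\<alpha>*l2)) * w2))"
    unfolding matrix_vector_mul_assoc[symmetric]
    by (subst (1 2) mdec, simp only: mv_basis[OF Ai] inner_basis[OF o1 o2 o12])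
  then have hq: "m \<bullet> ((Ai ** Ai) *v m) = w1\<^sup>2/(\<alpha>*l1)\<^sup>2 + w2\<^sup>2/(\<alpha>*l2)\<^sup>2"
    by (simp add: power2_eq_square)
  define a1 where "a1 = c*\<alpha>*l1*w1\<^sup>2"
  define a2 where "a2 = c*\<alpha>*l2*w2\<^sup>2"
  define a3 where "a3 = c*\<beta>*H\<^sup>2"
  define b1 where "b1 = 2*c*\<alpha>*l1"
  define b2 where "b2 = 2*c*\<alpha>*l2"
  define b3 where "b3 = 2*c*\<beta>"
  have eq: "\<forall>r\<ge>0. wfr_phi c \<alpha> \<beta> A \<rho> m H r = \<rho> + a1/(b1+r)\<^sup>2 + a2/(b2+r)\<^sup>2 + a3/(b3+r)\<^sup>2"
  proof (intro allI impI)
    fix r :: real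
    assume r: "r \<ge> 0"
    define K where "K = (2 * c * \<alpha>) *\<^sub>R A + r *\<^sub>R mat 1"
    have K: "K *v e1 = (2*c*\<alpha>*l1 + r) *\<^sub>R e1" "K *v e2 = (2*c*\<alpha>*l2 + r) *\<^sub>R e2"
      unfolding K_def by (simp_all add: matrix_vector_mult_add_rdistrib A1 A2 scaleR_add_left
          flip: scaleR_matrix_vector_assoc)
    have pos: "2*c*\<alpha>*l1 + r > 0" "2*c*\<alpha>*l2 + r > 0" using assms(1,2) l1 l2 r by (simp_all add: add_pos_nonneg)
    define B where "B = matrix_inv K"
    have B: "B *v e1 = (1/(2*c*\<alpha>*l1 + r)) *\<^sub>R e1" "B *v e2 = (1/(2*c*\<alpha>*l2 + r)) *\<^sub>R e2"
      unfolding B_def using inv_eig[OF o1 o2 o12 dec K] pos by auto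
    have "(B *v m) \<bullet> ((\<alpha> *\<^sub>R A) *v (B *v m)) =
       ((1/(2*c*\<alpha>*l1 + r)) * w1) * ((\<alpha>*l1) * ((1/(2*c*\<alpha>*l1 + r)) * w1))
     + ((1/(2*c*\<alpha>*l2 + r)) * w2) * ((\<alpha>*l2) * ((1/(2*c*\<alpha>*l2 + r)) * w2))"
      by (subst (1 2) mdec, simp only: mv_basis[OF B] mv_basis[OF sA(1)[of \<alpha>] sA(2)[of \<alpha>]]
           inner_basis[OF o1 o2 o12])
    then have "c * ((B *v m) \<bullet> ((\<alpha> *\<^sub>R A) *v (B *v m))) = a1/(b1+r)\<^sup>2 + a2/(b2+r)\<^sup>2"
      unfolding a1_def a2_def b1_def b2_def using pos by (simp add: field_simps power2_eq_square)
    moreover have "c * (inverse ((2 * c * \<beta> + r)\<^sup>2)) * \<beta> * H\<^sup>2 = a3/(b3+r)\<^sup>2"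
      unfolding a3_def b3_def by (simp add: field_simps)
    ultimately show "wfr_phi c \<alpha> \<beta> A \<rho> m H r = \<rho> + a1/(b1+r)\<^sup>2 + a2/(b2+r)\<^sup>2 + a3/(b3+r)\<^sup>2"
      unfolding wfr_phi_def Let_def B_def K_def by simp
  qed
  have qq: "2*a1/b1^3 + 2*a2/b2^3 + 2*a3/b3^3 = (1 / (4 * c\<^sup>2)) *
           (m \<bullet> ((matrix_inv (\<alpha> *\<^sub>R A) ** matrix_inv (\<alpha> *\<^sub>R A)) *v m)
            + inverse (\<beta>\<^sup>2) * H\<^sup>2)"
    unfolding Ai_def[symmetric] hq a1_def a2_def a3_def b1_def b2_def b3_def
    using assms l1 l2 by (simp add: field_simps power2_eq_square power3_eq_cube)
  show ?thesis
    by (rule scalar_main[OF assms(5) _ _ _ _ _ _ _ eq])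
       (use assms l1 l2 qq in \<open>auto simp: a1_def a2_def a3_def b1_def b2_def b3_def\<close>)
qed

end
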